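(* Let $G$ be a gradual mechanism for a social choice function $f$, and for an agent $i$ let $\boldsymbol{Z}_i$ be a partition of the terminal histories $Z$ such that the extended family of information sets $\overline{\boldsymbol{H}}_i=\boldsymbol{H}_i\cup\boldsymbol{Z}_i$ still satisfies perfect recall. For each $\boldsymbol{h}_i\in\overline{\boldsymbol{H}}_i$ let $\Theta(\boldsymbol{h}_i)=\bigcup_{h\in\boldsymbol{h}_i}\Theta(h)$ and $\Theta_{-i}(\boldsymbol{h}_i)=\bigcup_{h\in\boldsymbol{h}_i}\Theta_{-i}(h)$. Then the information flow $\mathbb{F}_i=\{\Theta(\boldsymbol{h}_i):\boldsymbol{h}_i\in\overline{\boldsymbol{H}}_i\}$ of agent $i$ satisfies: 1. For any $\underline{\boldsymbol{h}}_i\in\boldsymbol{H}_i$, $\{\Theta(\boldsymbol{h}_i)\}_{\boldsymbol{h}_i\in\sigma(\underline{\boldsymbol{h}}_i)}$ is a partition of $\Theta(\underline{\boldsymbol{h}}_i)$. 2. For any $\underline{\boldsymbol{h}}_i\in\boldsymbol{H}_i$ and any $a_i\in A_i(\underline{\boldsymbol{h}}_i)$, $\{\Theta_{-i}(\boldsymbol{h}_i)\}_{\boldsymbol{h}_i\in\sigma_{a_i}(\underline{\boldsymbol{h}}_i)}$ is a partition of $\Theta_{-i}(\underline{\boldsymbol{h}}_i)$.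
   Context: A finite set $N$ of agents; each agent $i$ has a type space $\Theta_i$, $\Theta=\prod_{i\in N}\Theta_i$; $f:\Theta\to X$ is a social choice function. A dynamic game form with perfect recall $G=(\overline{H},\{A_i,\boldsymbol{H}_i\}_{i\in N},\mathcal{X})$: each agent $i$ has a nonempty action set $A_i$; an action profile is an element of $\prod_{i\in M}A_i$ for some nonempty $M\subseteq N$. Histories are finite sequences of action profiles; $\overline{H}$ is a finite-length tree of such sequences containing $\varnothing$ and closed under immediate predecessors; $\preceq$ is the prefix order. $Z$ = $\preceq$-maximal (terminal) histories, $H=\overline{H}\setminus Z$. An active-player correspondence $\mathbb{P}:H\twoheadrightarrow N$ is such that the immediate successors of $h\in H$ are exactly $(h,a)$, $a\in\prod_{i\in\mathbb{P}(h)}A_i(h)$, with $A_i(h)$ the actions available to $i$ at $h$. $H_i=\{h\in H:i\in\mathbb{P}(h)\}$, and $\boldsymbol{H}_i$ is a partition of $H_i$ into information sets on which $A_i(\cdot)$ is constant (written $A_i(\boldsymbol{h}_i)$). Perfect recall: for $h,\tilde h$ in the same information set, $h_i=\tilde h_i$, and for every $\underline h\preceq h$ in an information set of $i$ there is $\underline{\tilde h}\preceq\tilde h$ in the same information set as $\underline h$. Here $h_i$ denotes the sequence of actions of $i$ in $h$. $\mathcal{X}:Z\to X$. A gradual mechanism for $f$ is such a game form with: (1) $A_i=2^{\Theta_i}\setminus\{\varnothing\}$; (2) for $h\in H_i$, the sets in $A_i(h)$ are pairwise disjoint with union $\bigcap h_i$ (the intersection of $i$'s actions in $h$; $\Theta_i$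 if none); (3) for $z\in Z$ and $\theta\in\prod_i\Theta_i(z)$, $\mathcal{X}(z)=f(\theta)$. For $h\in\overline{H}$, $\Theta_j(h)$ is the last action of agent $j$ in $h$ if $j$ has acted, and $\Theta_j$ otherwise; $\Theta(h)=\prod_{j\in N}\Theta_j(h)$ and $\Theta_{-i}(h)=\prod_{j\neq i}\Theta_j(h)$. On $\overline{\boldsymbol{H}}_i$ the precedence $\underline{\boldsymbol{h}}_i\preceq\boldsymbol{h}_i$ holds if there are $\underline h\in\underline{\boldsymbol{h}}_i$, $h\in\boldsymbol{h}_i$ with $\underline h\preceq h$; this makes $\overline{\boldsymbol{H}}_i$ an arborescence. $\sigma(\underline{\boldsymbol{h}}_i)$ denotes the set of immediate successors of $\underline{\boldsymbol{h}}_i$ in $\overline{\boldsymbol{H}}_i$, and for $a_i\in A_i(\underline{\boldsymbol{h}}_i)$, $\sigma_{a_i}(\underline{\boldsymbol{h}}_i)$ is the subset of those immediate successors reached after $i$ takes action $a_i$ at $\underline{\boldsymbol{h}}_i$ (equivalently those $\boldsymbol{h}_i$ with $\Theta_i(\boldsymbol{h}_i)=a_i$, where $\Theta_i(\boldsymbol{h}_i)$ is the common value of $\Theta_i(h)$, $h\in\boldsymbol{h}_i$). *)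

theory Defs
  imports Main "HOL-Library.Sublist" "HOL-Library.FuncSet"
begin

(* Agents: a finite type 'n (N = UNIV).
   An action profile is a partial map 'n => 'b option with nonempty domain M;
   a history is a finite list of action profiles. *)
type_synonym ('n,'b) hist = "('n \<Rightarrow> 'b option) list"

definition own :: "'n \<Rightarrow> ('n,'b) hist \<Rightarrow> 'b list" where
  "own i h = List.map_filter (\<lambda>a. a i) h"

definition terminal :: "('n,'b) hist set \<Rightarrow> ('n,'b) hist set" where
  "terminal Hb = {z \<in> Hb. \<forall>h\<in>Hb. prefix z h \<longrightarrow> h = z}"

definition nonterm_hist :: "('n,'b) hist set \<Rightarrow> ('n,'b) hist set" where
  "nonterm_hist Hb = Hb - terminal Hb"

definition active_hist :: "('n,'b) hist set \<Rightarrow> (('n,'b) hist \<Rightarrow> 'n set) \<Rightarrow> 'n \<Rightarrow> ('n,'b) hist set" where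
  "active_hist Hb P i = {h \<in> nonterm_hist Hb. i \<in> P h}"

definition is_partition :: "'a set set \<Rightarrow> 'a set \<Rightarrow> bool" where
  "is_partition F S \<longleftrightarrow> (\<forall>b\<in>F. b \<noteq> {}) \<and> (\<forall>b\<in>F. \<forall>c\<in>F. b \<noteq> c \<longrightarrow> b \<inter> c = {}) \<and> \<Union>F = S"

definition indexed_partition :: "'i set \<Rightarrow> ('i \<Rightarrow> 'a set) \<Rightarrow> 'a set \<Rightarrow> bool" where
  "indexed_partition I F S \<longleftrightarrow> (\<forall>x\<in>I. F x \<noteq> {}) \<and>
     (\<forall>x\<in>I. \<forall>y\<in>I. x \<noteq> y \<longrightarrow> F x \<inter> F y = {}) \<and> (\<Union>x\<in>I. F x) = S"

definition perfect_recall :: "'n \<Rightarrow> ('n,'b) hist set set \<Rightarrow> bool" where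
  "perfect_recall i fam \<longleftrightarrow>
     (\<forall>b\<in>fam. \<forall>h\<in>b. \<forall>h'\<in>b. own i h = own i h' \<and>
        (\<forall>c\<in>fam. \<forall>l\<in>c. prefix l h \<longrightarrow> (\<exists>l'\<in>c. prefix l' h')))"

(* Dynamic game form with perfect recall.
   Act i = A_i, Hb = Hbar, P = active-player correspondence, A i h = A_i(h),
   Info i = partition of H_i into information sets, X = outcome function on Z. *)
definition game_form ::
  "('n \<Rightarrow> 'b set) \<Rightarrow> ('n,'b) hist set \<Rightarrow> (('n,'b) hist \<Rightarrow> 'n set) \<Rightarrow>
   ('n \<Rightarrow> ('n,'b) hist \<Rightarrow> 'b set) \<Rightarrow> ('n \<Rightarrow> ('n,'b) hist set set) \<Rightarrow> (('n,'b) hist \<Rightarrow> 'x) \<Rightarrow> bool" where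
  "game_form Act Hb P A Info X \<longleftrightarrow>
     (\<forall>i. Act i \<noteq> {}) \<and>
     (\<forall>h\<in>Hb. \<forall>a\<in>set h. dom a \<noteq> {} \<and> (\<forall>i\<in>dom a. the (a i) \<in> Act i)) \<and>
     [] \<in> Hb \<and> (\<forall>h a. h @ [a] \<in> Hb \<longrightarrow> h \<in> Hb) \<and>
     (\<exists>n. \<forall>h\<in>Hb. length h \<le> n) \<and>
     (\<forall>h\<in>nonterm_hist Hb. (\<forall>i\<in>P h. A i h \<subseteq> Act i) \<and>
        {a. h @ [a] \<in> Hb} = {a. dom a = P h \<and> (\<forall>i\<in>P h. \<exists>x\<in>A i h. a i = Some x)}) \<and>
     (\<forall>i. is_partition (Info i) (active_hist Hb P i)) \<and>
     (\<forall>i. \<forall>b\<in>Info i. \<forall>h\<in>b. \<forall>h'\<in>b. A i h = A i h') \<and>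
     (\<forall>i. perfect_recall i (Info i))"

(* A_i of an information set (A_i is constant on information sets) *)
definition A_info :: "('n \<Rightarrow> ('n,'b) hist \<Rightarrow> 'b set) \<Rightarrow> 'n \<Rightarrow> ('n,'b) hist set \<Rightarrow> 'b set" where
  "A_info A i b = A i (SOME h. h \<in> b)"

definition type_at :: "('n \<Rightarrow> 't set) \<Rightarrow> 'n \<Rightarrow> ('n,'t set) hist \<Rightarrow> 't set" where
  "type_at Th j h = (if own j h = [] then Th j else last (own j h))"

definition ThetaP :: "('n \<Rightarrow> 't set) \<Rightarrow> ('n,'t set) hist \<Rightarrow> ('n \<Rightarrow> 't) set" where
  "ThetaP Th h = Pi UNIV (\<lambda>j. type_at Th j h)"

definition ThetaM :: "('n \<Rightarrow> 't set) \<Rightarrow> 'n \<Rightarrow> ('n,'t set) hist \<Rightarrow> ('n \<Rightarrow> 't) set" where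
  "ThetaM Th i h = PiE (UNIV - {i}) (\<lambda>j. type_at Th j h)"

definition ThetaS :: "('n \<Rightarrow> 't set) \<Rightarrow> ('n,'t set) hist set \<Rightarrow> ('n \<Rightarrow> 't) set" where
  "ThetaS Th b = (\<Union>h\<in>b. ThetaP Th h)"

definition ThetaMS :: "('n \<Rightarrow> 't set) \<Rightarrow> 'n \<Rightarrow> ('n,'t set) hist set \<Rightarrow> ('n \<Rightarrow> 't) set" where
  "ThetaMS Th i b = (\<Union>h\<in>b. ThetaM Th i h)"

definition own_inter :: "('n \<Rightarrow> 't set) \<Rightarrow> 'n \<Rightarrow> ('n,'t set) hist \<Rightarrow> 't set" where
  "own_inter Th i h = (if own i h = [] then Th i else \<Inter>(set (own i h)))"

definition gradual_mechanism ::
  "('n \<Rightarrow> 't set) \<Rightarrow> (('n \<Rightarrow> 't) \<Rightarrow> 'x) \<Rightarrow> ('n,'t set) hist set \<Rightarrow> (('n,'t set) hist \<Rightarrow> 'n set) \<Rightarrow>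
   ('n \<Rightarrow> ('n,'t set) hist \<Rightarrow> 't set set) \<Rightarrow> ('n \<Rightarrow> ('n,'t set) hist set set) \<Rightarrow> (('n,'t set) hist \<Rightarrow> 'x) \<Rightarrow> bool" where
  "gradual_mechanism Th f Hb P A Info X \<longleftrightarrow>
     game_form (\<lambda>i. {a. a \<noteq> {} \<and> a \<subseteq> Th i}) Hb P A Info X \<and>
     (\<forall>h\<in>nonterm_hist Hb. \<forall>i\<in>P h.
        (\<forall>a\<in>A i h. \<forall>a'\<in>A i h. a \<noteq> a' \<longrightarrow> a \<inter> a' = {}) \<and> \<Union>(A i h) = own_inter Th i h) \<and>
     (\<forall>z\<in>terminal Hb. \<forall>\<theta>\<in>ThetaP Th z. X z = f \<theta>)"

definition info_prec :: "('n,'b) hist set \<Rightarrow> ('n,'b) hist set \<Rightarrow> bool" where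
  "info_prec b b' \<longleftrightarrow> (\<exists>h\<in>b. \<exists>h'\<in>b'. prefix h h')"

definition info_sprec :: "('n,'b) hist set \<Rightarrow> ('n,'b) hist set \<Rightarrow> bool" where
  "info_sprec b b' \<longleftrightarrow> info_prec b b' \<and> b \<noteq> b'"

definition succ_info :: "('n,'b) hist set set \<Rightarrow> ('n,'b) hist set \<Rightarrow> ('n,'b) hist set set" where
  "succ_info fam b = {b' \<in> fam. info_sprec b b' \<and> \<not> (\<exists>c\<in>fam. info_sprec b c \<and> info_sprec c b')}"

definition succ_act :: "'n \<Rightarrow> ('n,'b) hist set set \<Rightarrow> ('n,'b) hist set \<Rightarrow> 'b \<Rightarrow> ('n,'b) hist set set" where
  "succ_act i fam b a = {b' \<in> succ_info fam b.
      \<exists>h\<in>b. \<exists>h'\<in>b'. \<exists>p. prefix (h @ [p]) h' \<and> p i = Some a}"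

end

theory Submission imports Defs begin

lemma own_Nil[simp]: "own i [] = []" by (simp add: own_def)
lemma own_Cons: "own i (x#xs) = (case x i of None \<Rightarrow> own i xs | Some v \<Rightarrow> v # own i xs)"
  by (simp add: own_def map_filter_simps split: option.split)
lemma own_append[simp]: "own i (xs@ys) = own i xs @ own i ys"
  by (induction xs) (simp_all add: own_Cons split: option.split)
lemma own_single[simp]: "own i [x] = (case x i of None \<Rightarrow> [] | Some v \<Rightarrow> [v])"
  by (simp add: own_Cons split: option.split)
lemma own_snoc: "own i (xs@[x]) = own i xs @ (case x i of None \<Rightarrow> [] | Some v \<Rightarrow> [v])"
  by (simp add: own_Cons split: option.split)
lemma own_prefix: "prefix u v \<Longrightarrow> prefix (own i u) (own i v)"
  by (auto simp: prefix_def)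

lemma type_snoc: "type_at Th j (w@[x]) = (case x j of None \<Rightarrow> type_at Th j w | Some y \<Rightarrow> y)"
  by (simp add: type_at_def own_snoc split: option.split)

lemma pc: "prefix (as @ [x]) (as @ x # r)" by simp

locale gm =
  fixes Th :: "'n::finite \<Rightarrow> 't set"
    and f :: "('n \<Rightarrow> 't) \<Rightarrow> 'x"
    and Hb :: "('n, 't set) hist set"
    and P :: "('n, 't set) hist \<Rightarrow> 'n set"
    and A :: "'n \<Rightarrow> ('n, 't set) hist \<Rightarrow> 't set set"
    and Info :: "'n \<Rightarrow> ('n, 't set) hist set set"
    and X :: "('n, 't set) hist \<Rightarrow> 'x"
  assumes gm: "gradual_mechanism Th f Hb P A Info X"
begin

abbreviation "Act \<equiv> (\<lambda>i. {a. a \<noteq> {} \<and> a \<subseteq> Th i})"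
lemma gf: "game_form Act Hb P A Info X"
  using gm unfolding gradual_mechanism_def by (elim conjE) assumption
lemma g2: "\<forall>h\<in>nonterm_hist Hb. \<forall>i\<in>P h.
        (\<forall>a\<in>A i h. \<forall>a'\<in>A i h. a \<noteq> a' \<longrightarrow> a \<inter> a' = {}) \<and> \<Union>(A i h) = own_inter Th i h"
  using gm unfolding gradual_mechanism_def by (elim conjE) assumption
lemma c1: "\<forall>i. Act i \<noteq> {}"
  using gf unfolding game_form_def by (elim conjE) assumption
lemma c4: "\<forall>h a. h @ [a] \<in> Hb \<longrightarrow> h \<in> Hb"
  using gf unfolding game_form_def by (elim conjE) assumption
lemma nil: "[] \<in> Hb"
  using gf unfolding game_form_def by (elim conjE) assumption
lemma bound: "\<exists>n. \<forall>h\<in>Hb. length h \<le> n"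
  using gf unfolding game_form_def by (elim conjE) assumption
lemma c6: "\<forall>h\<in>nonterm_hist Hb. (\<forall>i\<in>P h. A i h \<subseteq> Act i) \<and>
        {a. h @ [a] \<in> Hb} = {a. dom a = P h \<and> (\<forall>i\<in>P h. \<exists>x\<in>A i h. a i = Some x)}"
  using gf unfolding game_form_def by (elim conjE) assumption
lemma c7: "\<forall>i. is_partition (Info i) (active_hist Hb P i)"
  using gf unfolding game_form_def by (elim conjE) assumption
lemma c8: "\<forall>i. \<forall>b\<in>Info i. \<forall>h\<in>b. \<forall>h'\<in>b. A i h = A i h'"
  using gf unfolding game_form_def by (elim conjE) assumption

lemma Th_ne: "Th j \<noteq> {}"
proof -
  have "Act j \<noteq> {}" using c1 by blast
  then show ?thesis by auto
qed
lemma pre: "h @ [a] \<in> Hb \<Longrightarrow> h \<in> Hb"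
  using c4 by blast
lemma succ_char: "h \<in> nonterm_hist Hb \<Longrightarrow> (h @ [a] \<in> Hb) = (dom a = P h \<and> (\<forall>j\<in>P h. \<exists>x\<in>A j h. a j = Some x))"
proof -
  assume h: "h \<in> nonterm_hist Hb"
  have "{a. h @ [a] \<in> Hb} = {a. dom a = P h \<and> (\<forall>i\<in>P h. \<exists>x\<in>A i h. a i = Some x)}"
    using conjunct2[OF bspec[OF c6 h]] .
  then show ?thesis by (simp add: set_eq_iff)
qed
lemma A_sub: "h \<in> nonterm_hist Hb \<Longrightarrow> j \<in> P h \<Longrightarrow> x \<in> A j h \<Longrightarrow> x \<noteq> {} \<and> x \<subseteq> Th j"
proof -
  assume "h \<in> nonterm_hist Hb" "j \<in> P h" "x \<in> A j h"
  then have "x \<in> Act j" using conjunct1[OF bspec[OF c6]] by blast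
  then show ?thesis by simp
qed
lemma A_disj: "h \<in> nonterm_hist Hb \<Longrightarrow> j \<in> P h \<Longrightarrow> x \<in> A j h \<Longrightarrow> y \<in> A j h \<Longrightarrow> x \<noteq> y \<Longrightarrow> x \<inter> y = {}"
  using conjunct1[OF bspec[OF bspec[OF g2]]] by blast
lemma A_union: "h \<in> nonterm_hist Hb \<Longrightarrow> j \<in> P h \<Longrightarrow> \<Union>(A j h) = own_inter Th j h"
  using conjunct2[OF bspec[OF bspec[OF g2]]] by blast
lemma part: "is_partition (Info j) (active_hist Hb P j)"
  using c7 by blast
lemma Aconst: "c \<in> Info j \<Longrightarrow> h \<in> c \<Longrightarrow> h' \<in> c \<Longrightarrow> A j h = A j h'"
  using c8 by blast

lemma prefix_closed: "v \<in> Hb \<Longrightarrow> prefix u v \<Longrightarrow> u \<in> Hb"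
proof (induction v rule: rev_induct)
  case Nil then show ?case by simp
next
  case (snoc x xs) then show ?case using pre by auto
qed

lemma child: "w @ [x] \<in> Hb \<Longrightarrow> w \<in> nonterm_hist Hb"
  unfolding nonterm_hist_def terminal_def using pre by fastforce

lemma child2: "w @ [x] \<in> Hb \<Longrightarrow> x j = Some y \<Longrightarrow> j \<in> P w \<and> y \<in> A j w"
proof -
  assume a: "w @ [x] \<in> Hb" "x j = Some y"
  have d: "dom x = P w \<and> (\<forall>j\<in>P w. \<exists>z\<in>A j w. x j = Some z)" using succ_char[OF child[OF a(1)], of x] a(1) by simp
  have jP: "j \<in> P w" using d a(2) by (metis domI)
  then obtain z where "z \<in> A j w" "x j = Some z" using d by blast
  then show ?thesis using jP a(2) by simp
qed

lemma own_inter_eq: "v \<in> Hb \<Longrightarrow> own_inter Th j v = type_at Th j v"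
proof (induction v rule: rev_induct)
  case Nil then show ?case by (simp add: own_inter_def type_at_def)
next
  case (snoc x w)
  have w: "w \<in> Hb" using snoc pre by blast
  show ?case
  proof (cases "x j")
    case None
    then have "own j (w @ [x]) = own j w" by simp
    then show ?thesis using snoc.IH w by (cases "own j w = []") (simp_all add: own_inter_def type_at_def)
  next
    case (Some y)
    have c: "j \<in> P w \<and> y \<in> A j w" using child2 snoc.prems Some by blast
    have "y \<subseteq> own_inter Th j w" using A_union[OF child[OF snoc.prems]] c by blast
    then show ?thesis using Some by (auto simp add: own_inter_def type_at_def own_snoc split: if_splits)
  qed
qed

lemma type_sub: "w @ [x] \<in> Hb \<Longrightarrow> x j = Some y \<Longrightarrow> y \<subseteq> type_at Th j w"
proof -
  assume a: "w @ [x] \<in> Hb" "x j = Some y"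
  have c: "j \<in> P w \<and> y \<in> A j w" using child2 a by blast
  have "y \<subseteq> own_inter Th j w" using A_union[OF child[OF a(1)]] c by blast
  then show ?thesis using own_inter_eq pre a(1) by metis
qed

lemma type_step: "w @ [x] \<in> Hb \<Longrightarrow> type_at Th j (w@[x]) \<subseteq> type_at Th j w"
  using type_sub by (auto simp: type_snoc split: option.split)

lemma anti: "v \<in> Hb \<Longrightarrow> prefix u v \<Longrightarrow> type_at Th j v \<subseteq> type_at Th j u"
proof (induction v rule: rev_induct)
  case Nil then show ?case by simp
next
  case (snoc x w)
  show ?case
  proof (cases "u = w @ [x]")
    case True then show ?thesis by simp
  next
    case False
    then have "prefix u w" using snoc.prems by simp
    then show ?thesis using snoc pre type_step by blast
  qed
qed

lemma type_ne: "v \<in> Hb \<Longrightarrow> type_at Th j v \<noteq> {}"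
proof (induction v rule: rev_induct)
  case Nil then show ?case using Th_ne by (simp add: type_at_def)
next
  case (snoc x w)
  show ?case
  proof (cases "x j")
    case None then show ?thesis using snoc pre by (simp add: type_snoc)
  next
    case (Some y)
    have c: "j \<in> P w \<and> y \<in> A j w" using child2 snoc.prems Some by blast
    then have "y \<noteq> {}" using A_sub[OF child[OF snoc.prems]] by blast
    then show ?thesis using Some by (simp add: type_snoc)
  qed
qed

lemma ThetaP_anti: "v \<in> Hb \<Longrightarrow> prefix u v \<Longrightarrow> ThetaP Th v \<subseteq> ThetaP Th u"
proof -
  assume "v \<in> Hb" "prefix u v"
  then have "\<forall>j. type_at Th j v \<subseteq> type_at Th j u" using anti by blast
  then show ?thesis unfolding ThetaP_def Pi_def by blast
qed
lemma ThetaM_anti: "v \<in> Hb \<Longrightarrow> prefix u v \<Longrightarrow> ThetaM Th i v \<subseteq> ThetaM Th i u"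
proof -
  assume "v \<in> Hb" "prefix u v"
  then have "\<forall>j. type_at Th j v \<subseteq> type_at Th j u" using anti by blast
  then show ?thesis unfolding ThetaM_def PiE_def Pi_def by blast
qed
lemma ThetaP_ne: "v \<in> Hb \<Longrightarrow> ThetaP Th v \<noteq> {}"
proof -
  assume v: "v \<in> Hb"
  have "(\<lambda>j. SOME t. t \<in> type_at Th j v) \<in> ThetaP Th v"
    unfolding ThetaP_def using type_ne[OF v] by (auto simp: Pi_iff intro: some_in_eq[THEN iffD2])
  then show ?thesis by blast
qed
lemma ThetaM_ne: "v \<in> Hb \<Longrightarrow> ThetaM Th i v \<noteq> {}"
  unfolding ThetaM_def using type_ne by (simp add: PiE_eq_empty_iff)

lemma disjoint_par:
  assumes "g1 \<in> Hb" "g2 \<in> Hb" "g1 = as @ x # r1" "g2 = as @ y # r2" "x j \<noteq> y j"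
  shows "type_at Th j g1 \<inter> type_at Th j g2 = {}"
proof -
  have x: "as @ [x] \<in> Hb" using assms(3) prefix_closed[OF assms(1), of "as @ [x]"] by simp
  have y: "as @ [y] \<in> Hb" using assms(4) prefix_closed[OF assms(2), of "as @ [y]"] by simp
  have nt: "as \<in> nonterm_hist Hb" using child x by blast
  have dx: "dom x = P as \<and> (\<forall>j\<in>P as. \<exists>z\<in>A j as. x j = Some z)" using succ_char[OF nt, of x] x by simp
  have dy: "dom y = P as \<and> (\<forall>j\<in>P as. \<exists>z\<in>A j as. y j = Some z)" using succ_char[OF nt, of y] y by simp
  have jP: "j \<in> P as"
  proof (rule ccontr)
    assume "j \<notin> P as"
    then have "x j = None" "y j = None" using dx dy by blast+
    then show False using assms(5) by simp
  qed
  obtain x' y' where xy: "x' \<in> A j as" "x j = Some x'" "y' \<in> A j as" "y j = Some y'"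
    using dx dy jP by blast
  have "x' \<noteq> y'" using xy assms(5) by auto
  then have d: "x' \<inter> y' = {}" using A_disj[OF nt jP] xy by blast
  have "type_at Th j g1 \<subseteq> type_at Th j (as @ [x])" using assms(3) anti[OF assms(1), of "as @ [x]"] by simp
  moreover have "type_at Th j g2 \<subseteq> type_at Th j (as @ [y])" using assms(4) anti[OF assms(2), of "as @ [y]"] by simp
  ultimately show ?thesis using d xy by (auto simp: type_snoc)
qed

lemma exch: "g \<in> nonterm_hist Hb \<Longrightarrow> j \<in> P g \<Longrightarrow> t \<in> type_at Th j g \<Longrightarrow> \<exists>x\<in>A j g. t \<in> x"
  using A_union own_inter_eq unfolding nonterm_hist_def by (metis DiffD1 UnionE)

lemma child_theta:
  assumes "g \<in> nonterm_hist Hb" "\<theta> \<in> ThetaP Th g" "\<forall>j\<in>P g. ch j \<in> A j g \<and> \<theta> j \<in> ch j"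
    and p: "p = (\<lambda>j. if j \<in> P g then Some (ch j) else None)"
  shows "g @ [p] \<in> Hb \<and> \<theta> \<in> ThetaP Th (g @ [p])"
proof
  show "g @ [p] \<in> Hb" using succ_char[OF assms(1), of p] assms(3) p by (auto simp: dom_def)
  show "\<theta> \<in> ThetaP Th (g @ [p])" using assms(2,3) p by (auto simp: ThetaP_def Pi_iff type_snoc)
qed

lemma path: "g \<in> Hb \<Longrightarrow> \<theta> \<in> ThetaP Th g \<Longrightarrow> \<exists>z\<in>terminal Hb. prefix g z \<and> \<theta> \<in> ThetaP Th z"
proof -
  obtain n where n: "\<forall>h\<in>Hb. length h \<le> n" using bound by blast
  show "g \<in> Hb \<Longrightarrow> \<theta> \<in> ThetaP Th g \<Longrightarrow> \<exists>z\<in>terminal Hb. prefix g z \<and> \<theta> \<in> ThetaP Th z"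
  proof (induction "n - length g" arbitrary: g rule: less_induct)
    case less
    show ?case
    proof (cases "g \<in> terminal Hb")
      case True then show ?thesis using less.prems by blast
    next
      case False
      then have nt: "g \<in> nonterm_hist Hb" using less.prems by (simp add: nonterm_hist_def)
      define ch where "ch = (\<lambda>j. SOME x. x \<in> A j g \<and> \<theta> j \<in> x)"
      define p where "p = (\<lambda>j. if j \<in> P g then Some (ch j) else None)"
      have "\<forall>j\<in>P g. ch j \<in> A j g \<and> \<theta> j \<in> ch j"
      proof
        fix j assume j: "j \<in> P g"
        have "\<theta> j \<in> type_at Th j g" using less.prems by (simp add: ThetaP_def Pi_iff)
        then have "\<exists>x. x \<in> A j g \<and> \<theta> j \<in> x" using exch[OF nt j] by blast
        then show "ch j \<in> A j g \<and> \<theta> j \<in> ch j" unfolding ch_def by (rule someI_ex)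
      qed
      then have c: "g @ [p] \<in> Hb \<and> \<theta> \<in> ThetaP Th (g @ [p])" using child_theta[OF nt less.prems(2) _ p_def] by blast
      have "length (g @ [p]) \<le> n" using n c by blast
      then have "n - length (g @ [p]) < n - length g" by simp
      then obtain z where "z \<in> terminal Hb" "prefix (g @ [p]) z" "\<theta> \<in> ThetaP Th z"
        using less.hyps c by blast
      then show ?thesis by (meson prefix_order.dual_order.trans prefixI)
    qed
  qed
qed

end

locale gm2 = gm Th f Hb P A Info X
  for Th :: "'n::finite \<Rightarrow> 't set" and f :: "('n \<Rightarrow> 't) \<Rightarrow> 'x" and Hb :: "('n, 't set) hist set"
    and P A Info X +
  fixes i :: "'n" and Zi :: "('n, 't set) hist set set"
  assumes Zi: "is_partition Zi (terminal Hb)"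
    and pr: "perfect_recall i (Info i \<union> Zi)"
begin

abbreviation "fam \<equiv> Info i \<union> Zi"

lemma Inf_ne: "\<forall>b\<in>Info i. b \<noteq> {}" using part[of i] unfolding is_partition_def by (elim conjE) assumption
lemma Inf_disj: "\<forall>b\<in>Info i. \<forall>c\<in>Info i. b \<noteq> c \<longrightarrow> b \<inter> c = {}" using part[of i] unfolding is_partition_def by (elim conjE) assumption
lemma Inf_union: "\<Union>(Info i) = active_hist Hb P i" using part[of i] unfolding is_partition_def by (elim conjE) assumption
lemma Zi_ne: "\<forall>b\<in>Zi. b \<noteq> {}" using Zi unfolding is_partition_def by (elim conjE) assumption
lemma Zi_disj: "\<forall>b\<in>Zi. \<forall>c\<in>Zi. b \<noteq> c \<longrightarrow> b \<inter> c = {}" using Zi unfolding is_partition_def by (elim conjE) assumption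
lemma Zi_union: "\<Union>Zi = terminal Hb" using Zi unfolding is_partition_def by (elim conjE) assumption

lemma Info_active: "c \<in> Info i \<Longrightarrow> u \<in> c \<Longrightarrow> u \<in> active_hist Hb P i"
  using Inf_union by blast

lemma Zi_term: "c \<in> Zi \<Longrightarrow> u \<in> c \<Longrightarrow> u \<in> terminal Hb"
  using Zi_union by blast

lemma act_Hb: "u \<in> active_hist Hb P i \<Longrightarrow> u \<in> Hb" by (simp add: active_hist_def nonterm_hist_def)
lemma act_nt: "u \<in> active_hist Hb P i \<Longrightarrow> u \<notin> terminal Hb" by (simp add: active_hist_def nonterm_hist_def)
lemma term_Hb: "u \<in> terminal Hb \<Longrightarrow> u \<in> Hb" by (simp add: terminal_def)

lemma fam_sub: "c \<in> fam \<Longrightarrow> u \<in> c \<Longrightarrow> u \<in> Hb"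
  using Info_active act_Hb Zi_term term_Hb by blast

lemma fam_ne: "c \<in> fam \<Longrightarrow> c \<noteq> {}"
  using Inf_ne Zi_ne by blast

lemma fam_disj: "c1 \<in> fam \<Longrightarrow> c2 \<in> fam \<Longrightarrow> x \<in> c1 \<Longrightarrow> x \<in> c2 \<Longrightarrow> c1 = c2"
proof -
  assume a: "c1 \<in> fam" "c2 \<in> fam" "x \<in> c1" "x \<in> c2"
  show "c1 = c2"
  proof (cases "c1 \<in> Info i")
    case True
    show ?thesis
    proof (cases "c2 \<in> Info i")
      case True
      then show ?thesis using Inf_disj \<open>c1 \<in> Info i\<close> a by blast
    next
      case False
      then have "c2 \<in> Zi" using a by blast
      then show ?thesis using Zi_term act_nt Info_active True a by blast
    qed
  next
    case False
    then have z1: "c1 \<in> Zi" using a by blast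
    show ?thesis
    proof (cases "c2 \<in> Info i")
      case True
      then show ?thesis using Zi_term act_nt Info_active z1 a by blast
    next
      case False
      then have "c2 \<in> Zi" using a by blast
      then show ?thesis using Zi_disj z1 a by blast
    qed
  qed
qed

lemma own_eq: "c \<in> fam \<Longrightarrow> u \<in> c \<Longrightarrow> v \<in> c \<Longrightarrow> own i u = own i v"
  using pr unfolding perfect_recall_def by blast

lemma PR: "c \<in> fam \<Longrightarrow> u \<in> c \<Longrightarrow> v \<in> c \<Longrightarrow> d \<in> fam \<Longrightarrow> l \<in> d \<Longrightarrow> prefix l u \<Longrightarrow> \<exists>l'\<in>d. prefix l' v"
  using pr unfolding perfect_recall_def by blast

lemma own_grow:
  assumes u: "u \<in> active_hist Hb P i" and v: "v \<in> Hb" "prefix u v" "u \<noteq> v"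
  shows "length (own i u) < length (own i v)"
proof -
  obtain x r where vr: "v = u @ x # r" using v by (metis prefixE append_Nil2 neq_Nil_conv)
  have ux: "u @ [x] \<in> Hb" using vr prefix_closed[OF v(1), of "u @ [x]"] by simp
  then have "dom x = P u" using succ_char[OF child[OF ux], of x] by simp
  then have "x i \<noteq> None" using u unfolding active_hist_def by blast
  then show ?thesis using vr by (auto simp: own_Cons)
qed

lemma F4: "c \<in> fam \<Longrightarrow> u \<in> c \<Longrightarrow> v \<in> c \<Longrightarrow> prefix u v \<Longrightarrow> u = v"
proof -
  assume a: "c \<in> fam" "u \<in> c" "v \<in> c" "prefix u v"
  show "u = v"
  proof (cases "c \<in> Info i")
    case True
    then show ?thesis using own_grow[OF Info_active[OF True a(2)] fam_sub[OF a(1,3)] a(4)] own_eq[OF a(1-3)] by force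
  next
    case False
    then have "c \<in> Zi" using a by blast
    then have "u \<in> terminal Hb" using a Zi unfolding is_partition_def by blast
    then show ?thesis using a fam_sub unfolding terminal_def by blast
  qed
qed

lemma IMM:
  assumes b: "b \<in> Info i" "h \<in> b" and b': "b' \<in> fam" "g \<in> b'" and hg: "prefix h g" "h \<noteq> g"
    and nb: "\<forall>g'\<in>\<Union>fam. prefix h g' \<longrightarrow> prefix g' g \<longrightarrow> g' = h \<or> g' = g"
  shows "b' \<in> succ_info fam b"
proof -
  have bf: "b \<in> fam" using b by blast
  have "b \<noteq> b'"
  proof
    assume "b = b'"
    then have hb': "h \<in> b'" using b by simp
    show False using F4[OF b'(1) hb' b'(2) hg(1)] hg(2) by blast
  qed
  then have s1: "info_sprec b b'" using b b' hg unfolding info_sprec_def info_prec_def by blast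
  have "\<not> (\<exists>c\<in>fam. info_sprec b c \<and> info_sprec c b')"
  proof
    assume "\<exists>c\<in>fam. info_sprec b c \<and> info_sprec c b'"
    then obtain c where c: "c \<in> fam" "info_sprec b c" "info_sprec c b'" by blast
    obtain l g'' where lg: "l \<in> c" "g'' \<in> b'" "prefix l g''" using c(3) unfolding info_sprec_def info_prec_def by blast
    obtain l' where l': "l' \<in> c" "prefix l' g" using PR[OF b'(1) lg(2) b'(2) c(1) lg(1,3)] by blast
    obtain k m where km: "k \<in> b" "m \<in> c" "prefix k m" using c(2) unfolding info_sprec_def info_prec_def by blast
    obtain k' where k': "k' \<in> b" "prefix k' l'" using PR[OF c(1) km(2) l'(1) bf km(1,3)] by blast
    have "prefix k' g" using k' l' by (meson prefix_order.trans)
    then have "prefix k' h \<or> prefix h k'" using hg(1) prefix_same_cases by blast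
    then have "k' = h" using F4[OF bf] k' b by (metis)
    then have "l' = h \<or> l' = g" using nb l' c(1) k' by blast
    moreover have "l' \<noteq> h" using fam_disj[OF c(1) bf] l' b c(2) unfolding info_sprec_def by blast
    moreover have "l' \<noteq> g" using fam_disj[OF c(1) b'(1)] l' b' c(3) unfolding info_sprec_def by blast
    ultimately show False by blast
  qed
  then show ?thesis using s1 b' unfolding succ_info_def by blast
qed

lemma COMP:
  assumes "b1 \<in> succ_info fam b" "b2 \<in> succ_info fam b" "h1 \<in> b1" "h2 \<in> b2" "prefix h1 h2"
  shows "b1 = b2"
proof (rule ccontr)
  assume ne: "b1 \<noteq> b2"
  have "info_sprec b1 b2" using assms ne unfolding info_sprec_def info_prec_def by blast
  moreover have "info_sprec b b1" "b1 \<in> fam" using assms(1) unfolding succ_info_def by blast+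
  ultimately show False using assms(2) unfolding succ_info_def by blast
qed

lemma FIRST:
  assumes b: "b \<in> Info i" "h \<in> b" and z: "z \<in> terminal Hb" "prefix q z" "prefix h q" "length q = Suc (length h)"
  shows "\<exists>b' g. b' \<in> succ_info fam b \<and> g \<in> b' \<and> prefix q g \<and> prefix g z"
proof -
  define S where "S = {k. length q \<le> k \<and> k \<le> length z \<and> take k z \<in> \<Union>fam}"
  have zf: "z \<in> \<Union>fam" using z Zi unfolding is_partition_def by blast
  have "length z \<in> S" unfolding S_def using zf z(2) prefix_length_le by auto
  define k0 where "k0 = (LEAST k. k \<in> S)"
  have k0S: "k0 \<in> S" unfolding k0_def by (rule LeastI) fact
  have k0min: "\<And>k. k \<in> S \<Longrightarrow> k0 \<le> k" unfolding k0_def by (rule Least_le)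
  define g where "g = take k0 z"
  obtain b' where b': "b' \<in> fam" "g \<in> b'" using k0S unfolding S_def g_def by blast
  have qz: "q = take (length q) z" using z(2) by (metis append_eq_conv_conj prefixE)
  have hz: "h = take (length h) z" using z(2,3) by (metis append_eq_conv_conj prefixE prefix_order.trans)
  have lk: "length q \<le> k0" "k0 \<le> length z" using k0S unfolding S_def by auto
  have e: "take (length q) (take k0 z) = take (length q) z" using lk(1) by (simp add: min_def)
  have qg: "prefix q g" using take_is_prefix[of "length q" "take k0 z"] e qz unfolding g_def by metis
  have gz: "prefix g z" unfolding g_def by (rule take_is_prefix)
  have hg: "prefix h g" using z(3) qg by (meson prefix_order.trans)
  have hng: "h \<noteq> g" using prefix_length_le[OF qg] z(4) by auto
  have nb: "\<forall>g'\<in>\<Union>fam. prefix h g' \<longrightarrow> prefix g' g \<longrightarrow> g' = h \<or> g' = g"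
  proof (intro ballI impI)
    fix g' assume g': "g' \<in> \<Union>fam" "prefix h g'" "prefix g' g"
    show "g' = h \<or> g' = g"
    proof (rule ccontr)
      assume ne: "\<not> (g' = h \<or> g' = g)"
      have l1: "length h < length g'" using g'(2) ne by (metis prefix_length_le prefix_length_prefix prefix_order.antisym le_neq_implies_less prefix_order.refl)
      have l2: "length g' < length g" using g'(3) ne by (metis prefix_length_le prefix_length_prefix prefix_order.antisym le_neq_implies_less prefix_order.refl)
      have g'z: "g' = take (length g') z" using g'(3) gz by (metis append_eq_conv_conj prefixE prefix_order.trans)
      have "length g' \<in> S" unfolding S_def using l1 l2 z(4) g'z g'(1) lk unfolding g_def by auto
      then have "k0 \<le> length g'" by (rule k0min)
      then show False using l2 lk unfolding g_def by simp
    qed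
  qed
  show ?thesis using IMM[OF b b' hg hng nb] qg gz b' by blast
qed


lemma OWNA:
  assumes b: "b \<in> Info i" and b': "b' \<in> succ_act i fam b a" and h1: "h1 \<in> b'" and g1: "g1 \<in> b"
  shows "\<exists>r. own i h1 = own i g1 @ [a] @ r"
proof -
  obtain g h' p where x: "g \<in> b" "h' \<in> b'" "prefix (g @ [p]) h'" "p i = Some a"
    using b' unfolding succ_act_def by blast
  have b'f: "b' \<in> fam" using b' unfolding succ_act_def succ_info_def by blast
  obtain r' where "h' = g @ [p] @ r'" using x(3) by (auto elim: prefixE)
  then have "own i h' = own i g @ [a] @ own i r'" using x(4) by (simp add: own_Cons)
  moreover have "own i h1 = own i h'" using own_eq[OF b'f h1 x(2)] .
  moreover have "own i g = own i g1" using own_eq[OF _ x(1) g1] b by blast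
  ultimately show ?thesis by auto
qed

lemma anc:
  assumes b: "b \<in> Info i" and "b1 \<in> succ_info fam b" "h1 \<in> b1"
  shows "\<exists>g1\<in>b. prefix g1 h1"
proof -
  obtain g h' where gh: "g \<in> b" "h' \<in> b1" "prefix g h'" using assms(2) unfolding succ_info_def info_sprec_def info_prec_def by blast
  have "b1 \<in> fam" using assms(2) unfolding succ_info_def by blast
  moreover have "b \<in> fam" using b by blast
  ultimately show ?thesis using PR[OF _ gh(2) assms(3) _ gh(1,3)] by blast
qed

lemma part2_disj:
  assumes b: "b \<in> Info i" and b1: "b1 \<in> succ_act i fam b a" and b2: "b2 \<in> succ_act i fam b a"
    and h: "h1 \<in> b1" "h2 \<in> b2" and th: "\<theta> \<in> ThetaM Th i h1" "\<theta> \<in> ThetaM Th i h2"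
  shows "b1 = b2"
proof -
  have s1: "b1 \<in> succ_info fam b" and s2: "b2 \<in> succ_info fam b" using b1 b2 unfolding succ_act_def by blast+
  have f1: "b1 \<in> fam" and f2: "b2 \<in> fam" using s1 s2 unfolding succ_info_def by blast+
  have hb: "h1 \<in> Hb" "h2 \<in> Hb" using fam_sub f1 f2 h by blast+
  show ?thesis
  proof (cases "prefix h1 h2 \<or> prefix h2 h1")
    case True
    then show ?thesis using COMP[OF s1 s2 h] COMP[OF s2 s1 h(2) h(1)] by blast
  next
    case False
    then have "h1 \<parallel> h2" unfolding parallel_def by blast
    then obtain as x bs y cs where d: "x \<noteq> y" "h1 = as @ x # bs" "h2 = as @ y # cs"
      using parallel_decomp by blast
    have oth: "\<forall>j. j \<noteq> i \<longrightarrow> x j = y j"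
    proof (intro allI impI)
      fix j assume j: "j \<noteq> i"
      show "x j = y j"
      proof (rule ccontr)
        assume "x j \<noteq> y j"
        then have "type_at Th j h1 \<inter> type_at Th j h2 = {}" using disjoint_par[OF hb d(2,3)] by blast
        moreover have "\<theta> j \<in> type_at Th j h1" "\<theta> j \<in> type_at Th j h2" using th j by (auto simp: ThetaM_def PiE_iff)
        ultimately show False by blast
      qed
    qed
    then have xi: "x i \<noteq> y i" using d(1) by (metis ext)
    have x: "as @ [x] \<in> Hb" using d(2) prefix_closed[OF hb(1), of "as @ [x]"] by simp
    have y: "as @ [y] \<in> Hb" using d(3) prefix_closed[OF hb(2), of "as @ [y]"] by simp
    have nt: "as \<in> nonterm_hist Hb" using child x by blast
    have dx: "dom x = P as" using succ_char[OF nt, of x] x by simp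
    have dy: "dom y = P as" using succ_char[OF nt, of y] y by simp
    have iP: "i \<in> P as" using xi dx dy by (metis domIff)
    obtain xv yv where xyv: "x i = Some xv" "y i = Some yv" using iP dx dy by (metis domD)
    have xyne: "xv \<noteq> yv" using xi xyv by simp
    have o1: "own i h1 = own i as @ xv # own i bs" using d xyv by (simp add: own_Cons)
    have o2: "own i h2 = own i as @ yv # own i cs" using d xyv by (simp add: own_Cons)
    obtain g1 where g1: "g1 \<in> b" "prefix g1 h1" using anc[OF b s1 h(1)] by blast
    obtain r1 where r1: "own i h1 = own i g1 @ [a] @ r1" using OWNA[OF b b1 h(1) g1(1)] by blast
    obtain r2 where r2: "own i h2 = own i g1 @ [a] @ r2" using OWNA[OF b b2 h(2) g1(1)] by blast
    have lt: "length (own i g1) < length (own i as)"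
    proof (rule ccontr)
      assume "\<not> ?thesis"
      then have le: "length (own i as) \<le> length (own i g1)" by simp
      let ?n = "length (own i as)"
      have "own i h1 ! ?n = xv" using o1 by simp
      moreover have "own i h2 ! ?n = yv" using o2 by simp
      moreover have "own i h1 ! ?n = own i h2 ! ?n" using r1 r2 le
        by (cases "?n < length (own i g1)") (auto simp: nth_append)
      ultimately show False using xyne by simp
    qed
    have "prefix as h1" using d by simp
    then have "prefix g1 as \<or> prefix as g1" using g1 prefix_same_cases by blast
    moreover have "\<not> prefix as g1" using own_prefix[of as g1 i] lt prefix_length_le by fastforce
    ultimately have ga: "prefix g1 as" "g1 \<noteq> as" using lt by auto
    have "as \<in> active_hist Hb P i" using nt iP unfolding active_hist_def by blast
    then obtain c where c: "c \<in> Info i" "as \<in> c" using part[of i] unfolding is_partition_def by blast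
    have cf: "c \<in> fam" using c by blast
    have bf: "b \<in> fam" using b by blast
    have "b \<noteq> c" using F4[OF cf _ c(2) ga(1)] g1(1) ga(2) by blast
    then have sp1: "info_sprec b c" using g1 c ga unfolding info_sprec_def info_prec_def by blast
    have "c \<noteq> b1" using F4[OF cf c(2) _ \<open>prefix as h1\<close>] h(1) d(2) by auto
    then have sp2: "info_sprec c b1" using c h(1) \<open>prefix as h1\<close> unfolding info_sprec_def info_prec_def by blast
    show ?thesis using s1 cf sp1 sp2 unfolding succ_info_def by blast
  qed
qed

lemma main1: "b \<in> Info i \<Longrightarrow> indexed_partition (succ_info fam b) (ThetaS Th) (ThetaS Th b)"
proof -
  assume b: "b \<in> Info i"
  have bf: "b \<in> fam" using b by blast
  have ne: "\<forall>x\<in>succ_info fam b. ThetaS Th x \<noteq> {}"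
  proof
    fix x assume "x \<in> succ_info fam b"
    then have xf: "x \<in> fam" unfolding succ_info_def by blast
    then obtain h where "h \<in> x" using fam_ne by blast
    then show "ThetaS Th x \<noteq> {}" using ThetaP_ne fam_sub[OF xf] unfolding ThetaS_def by blast
  qed
  have dj: "\<forall>x\<in>succ_info fam b. \<forall>y\<in>succ_info fam b. x \<noteq> y \<longrightarrow> ThetaS Th x \<inter> ThetaS Th y = {}"
  proof (intro ballI impI)
    fix b1 b2 assume s: "b1 \<in> succ_info fam b" "b2 \<in> succ_info fam b" "b1 \<noteq> b2"
    show "ThetaS Th b1 \<inter> ThetaS Th b2 = {}"
    proof (rule ccontr)
      assume "\<not> ?thesis"
      then obtain h1 h2 \<theta> where h: "h1 \<in> b1" "h2 \<in> b2" "\<theta> \<in> ThetaP Th h1" "\<theta> \<in> ThetaP Th h2"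
        unfolding ThetaS_def by blast
      have f: "b1 \<in> fam" "b2 \<in> fam" using s unfolding succ_info_def by blast+
      have hb: "h1 \<in> Hb" "h2 \<in> Hb" using fam_sub f h by blast+
      show False
      proof (cases "prefix h1 h2 \<or> prefix h2 h1")
        case True
        then show ?thesis using COMP[OF s(1,2) h(1,2)] COMP[OF s(2,1) h(2,1)] s(3) by blast
      next
        case False
        then have "h1 \<parallel> h2" unfolding parallel_def by blast
        then obtain as x bs y cs where d: "x \<noteq> y" "h1 = as @ x # bs" "h2 = as @ y # cs"
          using parallel_decomp by blast
        obtain j where "x j \<noteq> y j" using d(1) by (metis ext)
        then have "type_at Th j h1 \<inter> type_at Th j h2 = {}" using disjoint_par[OF hb d(2,3)] by blast
        moreover have "\<theta> j \<in> type_at Th j h1" "\<theta> j \<in> type_at Th j h2" using h by (auto simp: ThetaP_def Pi_iff)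
        ultimately show False by blast
      qed
    qed
  qed
  have un1: "(\<Union>x\<in>succ_info fam b. ThetaS Th x) \<subseteq> ThetaS Th b"
  proof
    fix \<theta> assume "\<theta> \<in> (\<Union>x\<in>succ_info fam b. ThetaS Th x)"
    then obtain b' h' where x: "b' \<in> succ_info fam b" "h' \<in> b'" "\<theta> \<in> ThetaP Th h'" unfolding ThetaS_def by blast
    obtain g where g: "g \<in> b" "prefix g h'" using anc[OF b x(1,2)] by blast
    have "h' \<in> Hb" using fam_sub x unfolding succ_info_def by blast
    then show "\<theta> \<in> ThetaS Th b" using ThetaP_anti g x unfolding ThetaS_def by blast
  qed
  have un2: "ThetaS Th b \<subseteq> (\<Union>x\<in>succ_info fam b. ThetaS Th x)"
  proof
    fix \<theta> assume "\<theta> \<in> ThetaS Th b"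
    then obtain h where h: "h \<in> b" "\<theta> \<in> ThetaP Th h" unfolding ThetaS_def by blast
    have act: "h \<in> active_hist Hb P i" using Info_active b h by blast
    then have nt: "h \<in> nonterm_hist Hb" unfolding active_hist_def by blast
    define ch where "ch = (\<lambda>j. SOME x. x \<in> A j h \<and> \<theta> j \<in> x)"
    define p where "p = (\<lambda>j. if j \<in> P h then Some (ch j) else None)"
    have "\<forall>j\<in>P h. ch j \<in> A j h \<and> \<theta> j \<in> ch j"
    proof
      fix j assume j: "j \<in> P h"
      have "\<theta> j \<in> type_at Th j h" using h by (simp add: ThetaP_def Pi_iff)
      then have "\<exists>x. x \<in> A j h \<and> \<theta> j \<in> x" using exch[OF nt j] by blast
      then show "ch j \<in> A j h \<and> \<theta> j \<in> ch j" unfolding ch_def by (rule someI_ex)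
    qed
    then have c: "h @ [p] \<in> Hb \<and> \<theta> \<in> ThetaP Th (h @ [p])" using child_theta[OF nt h(2) _ p_def] by blast
    then obtain z where z: "z \<in> terminal Hb" "prefix (h @ [p]) z" "\<theta> \<in> ThetaP Th z" using path by blast
    obtain b' g where bg: "b' \<in> succ_info fam b" "g \<in> b'" "prefix (h @ [p]) g" "prefix g z"
      using FIRST[OF b h(1) z(1,2)] by auto
    have "z \<in> Hb" using z unfolding terminal_def by blast
    then have "\<theta> \<in> ThetaP Th g" using ThetaP_anti bg z by blast
    then show "\<theta> \<in> (\<Union>x\<in>succ_info fam b. ThetaS Th x)" using bg unfolding ThetaS_def by blast
  qed
  show ?thesis unfolding indexed_partition_def using ne dj un1 un2 by blast
qed

lemma main2: "b \<in> Info i \<Longrightarrow> a \<in> A_info A i b \<Longrightarrow> indexed_partition (succ_act i fam b a) (ThetaMS Th i) (ThetaMS Th i b)"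
proof -
  assume b: "b \<in> Info i" and a: "a \<in> A_info A i b"
  have bf: "b \<in> fam" using b by blast
  have aA: "\<And>h. h \<in> b \<Longrightarrow> a \<in> A i h"
  proof -
    fix h assume h: "h \<in> b"
    have "(SOME h. h \<in> b) \<in> b" using h by (rule someI)
    then show "a \<in> A i h" using a Aconst[OF b h] unfolding A_info_def by metis
  qed
  have sa: "\<And>x. x \<in> succ_act i fam b a \<Longrightarrow> x \<in> succ_info fam b" unfolding succ_act_def by blast
  have ne: "\<forall>x\<in>succ_act i fam b a. ThetaMS Th i x \<noteq> {}"
  proof
    fix x assume "x \<in> succ_act i fam b a"
    then have xf: "x \<in> fam" using sa unfolding succ_info_def by blast
    then obtain h where "h \<in> x" using fam_ne by blast
    then show "ThetaMS Th i x \<noteq> {}" using ThetaM_ne fam_sub[OF xf] unfolding ThetaMS_def by blast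
  qed
  have dj: "\<forall>x\<in>succ_act i fam b a. \<forall>y\<in>succ_act i fam b a. x \<noteq> y \<longrightarrow> ThetaMS Th i x \<inter> ThetaMS Th i y = {}"
  proof (intro ballI impI)
    fix b1 b2 assume s: "b1 \<in> succ_act i fam b a" "b2 \<in> succ_act i fam b a" "b1 \<noteq> b2"
    show "ThetaMS Th i b1 \<inter> ThetaMS Th i b2 = {}"
    proof (rule ccontr)
      assume "\<not> ?thesis"
      then obtain h1 h2 \<theta> where h: "h1 \<in> b1" "h2 \<in> b2" "\<theta> \<in> ThetaM Th i h1" "\<theta> \<in> ThetaM Th i h2"
        unfolding ThetaMS_def by blast
      show False using part2_disj[OF b s(1,2) h] s(3) by blast
    qed
  qed
  have un1: "(\<Union>x\<in>succ_act i fam b a. ThetaMS Th i x) \<subseteq> ThetaMS Th i b"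
  proof
    fix \<theta> assume "\<theta> \<in> (\<Union>x\<in>succ_act i fam b a. ThetaMS Th i x)"
    then obtain b' h' where x: "b' \<in> succ_info fam b" "h' \<in> b'" "\<theta> \<in> ThetaM Th i h'" unfolding ThetaMS_def using sa by blast
    obtain g where g: "g \<in> b" "prefix g h'" using anc[OF b x(1,2)] by blast
    have "h' \<in> Hb" using fam_sub x unfolding succ_info_def by blast
    then show "\<theta> \<in> ThetaMS Th i b" using ThetaM_anti g x unfolding ThetaMS_def by blast
  qed
  have un2: "ThetaMS Th i b \<subseteq> (\<Union>x\<in>succ_act i fam b a. ThetaMS Th i x)"
  proof
    fix \<theta>m assume "\<theta>m \<in> ThetaMS Th i b"
    then obtain h where h: "h \<in> b" "\<theta>m \<in> ThetaM Th i h" unfolding ThetaMS_def by blast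
    have act: "h \<in> active_hist Hb P i" using Info_active b h by blast
    then have nt: "h \<in> nonterm_hist Hb" and iP: "i \<in> P h" unfolding active_hist_def by blast+
    have ah: "a \<in> A i h" using aA h(1) .
    then obtain t where t: "t \<in> a" using A_sub[OF nt iP] by blast
    define \<theta> where "\<theta> = \<theta>m(i := t)"
    have hHb: "h \<in> Hb" using nt unfolding nonterm_hist_def by blast
    have ti: "t \<in> type_at Th i h" using A_union[OF nt iP] own_inter_eq[OF hHb] ah t by blast
    have th: "\<theta> \<in> ThetaP Th h" using h(2) ti unfolding \<theta>_def by (auto simp: ThetaP_def ThetaM_def PiE_iff)
    define ch where "ch = (\<lambda>j. SOME x. x \<in> A j h \<and> \<theta> j \<in> x)(i := a)"
    define p where "p = (\<lambda>j. if j \<in> P h then Some (ch j) else None)"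
    have "\<forall>j\<in>P h. ch j \<in> A j h \<and> \<theta> j \<in> ch j"
    proof
      fix j assume j: "j \<in> P h"
      show "ch j \<in> A j h \<and> \<theta> j \<in> ch j"
      proof (cases "j = i")
        case True then show ?thesis using ah t unfolding ch_def \<theta>_def by simp
      next
        case False
        have "\<theta> j \<in> type_at Th j h" using th by (simp add: ThetaP_def Pi_iff)
        then have "\<exists>x. x \<in> A j h \<and> \<theta> j \<in> x" using exch[OF nt j] by blast
        then have "(SOME x. x \<in> A j h \<and> \<theta> j \<in> x) \<in> A j h \<and> \<theta> j \<in> (SOME x. x \<in> A j h \<and> \<theta> j \<in> x)" by (rule someI_ex)
        then show ?thesis unfolding ch_def using False by simp
      qed
    qed
    then have c: "h @ [p] \<in> Hb \<and> \<theta> \<in> ThetaP Th (h @ [p])" using child_theta[OF nt th _ p_def] by blast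
    have pi: "p i = Some a" unfolding p_def ch_def using iP by simp
    obtain z where z: "z \<in> terminal Hb" "prefix (h @ [p]) z" "\<theta> \<in> ThetaP Th z" using path c by blast
    obtain b' g where bg: "b' \<in> succ_info fam b" "g \<in> b'" "prefix (h @ [p]) g" "prefix g z"
      using FIRST[OF b h(1) z(1,2)] by auto
    have "z \<in> Hb" using z unfolding terminal_def by blast
    then have tg: "\<theta> \<in> ThetaP Th g" using ThetaP_anti bg z by blast
    have "\<theta>m \<in> ThetaM Th i g" using tg h(2) unfolding \<theta>_def by (auto simp: ThetaP_def ThetaM_def PiE_iff Pi_iff split: if_splits)
    moreover have "b' \<in> succ_act i fam b a" unfolding succ_act_def using bg h(1) pi by blast
    ultimately show "\<theta>m \<in> (\<Union>x\<in>succ_act i fam b a. ThetaMS Th i x)" using bg unfolding ThetaMS_def by blast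
  qed
  show ?thesis unfolding indexed_partition_def using ne dj un1 un2 by blast
qed

end

theorem proposition2:
  fixes Th :: "'n::finite \<Rightarrow> 't set"
    and f :: "('n \<Rightarrow> 't) \<Rightarrow> 'x"
    and Hb :: "('n, 't set) hist set"
    and P :: "('n, 't set) hist \<Rightarrow> 'n set"
    and A :: "'n \<Rightarrow> ('n, 't set) hist \<Rightarrow> 't set set"
    and Info :: "'n \<Rightarrow> ('n, 't set) hist set set"
    and X :: "('n, 't set) hist \<Rightarrow> 'x"
    and i :: 'n
    and Zi :: "('n, 't set) hist set set"
  assumes "gradual_mechanism Th f Hb P A Info X"
    and "is_partition Zi (terminal Hb)"
    and "perfect_recall i (Info i \<union> Zi)"
  shows "(\<forall>b\<in>Info i. indexed_partition (succ_info (Info i \<union> Zi) b) (ThetaS Th) (ThetaS Th b)) \<and>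
         (\<forall>b\<in>Info i. \<forall>a\<in>A_info A i b.
            indexed_partition (succ_act i (Info i \<union> Zi) b a) (ThetaMS Th i) (ThetaMS Th i b))"
proof -
  interpret gm2 Th f Hb P A Info X i Zi
    using assms by (unfold_locales) auto
  show ?thesis using main1 main2 by blast
qed

end
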